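(* Let $n\ge 2$. Suppose $\{a_i\}_{i=1}^k$ is a tight frame set for $\mathcal{H}_n$ and $b\ge 0$. Let $m=\max_{i=2,\dots,k}a_i^2$. Then $\{b,a_2,\dots,a_k\}$ is a tight frame set for $\mathcal{H}_n$ if and only if $$b^2\in\Big[\,nm-\sum_{i=2}^k a_i^2,\ \frac{1}{n-1}\sum_{i=2}^k a_i^2\,\Big].$$
   Context: $\mathcal{H}_n$ is an $n$-dimensional real or complex Hilbert space. A sequence of nonnegative numbers $\{a_i\}_{i=1}^k$ is a tight frame set for $\mathcal{H}_n$ if there exists a tight frame $\{f_i\}_{i=1}^k$ for $\mathcal{H}_n$ (i.e. vectors with $\sum_i|\langle f,f_i\rangle|^2=\lambda\|f\|^2$ for all $f$, for some $\lambda>0$) with $\|f_i\|=a_i$ for all $i$. *)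

theory Defs
  imports "HOL-Analysis.Analysis"
begin

text \<open>H_n is modelled as real^'n (real case) or complex^'n (complex case),
  with n = CARD('n). Sequences are indexed by 1..k.\<close>

definition tight_frame_real :: "(nat \<Rightarrow> real^'n) \<Rightarrow> nat \<Rightarrow> bool" where
  "tight_frame_real f k \<longleftrightarrow>
     (\<exists>c>0. \<forall>x::real^'n. (\<Sum>i=1..k. (x \<bullet> f i)\<^sup>2) = c * (norm x)\<^sup>2)"

definition cinner_vec :: "complex^'n \<Rightarrow> complex^'n \<Rightarrow> complex" where
  "cinner_vec x y = (\<Sum>j\<in>UNIV. x $ j * cnj (y $ j))"

definition tight_frame_complex :: "(nat \<Rightarrow> complex^'n) \<Rightarrow> nat \<Rightarrow> bool" where
  "tight_frame_complex f k \<longleftrightarrow>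
     (\<exists>c>0. \<forall>x::complex^'n. (\<Sum>i=1..k. (cmod (cinner_vec x (f i)))\<^sup>2) = c * (norm x)\<^sup>2)"

definition tight_frame_set_real :: "('n::finite) itself \<Rightarrow> nat \<Rightarrow> (nat \<Rightarrow> real) \<Rightarrow> bool" where
  "tight_frame_set_real _ k a \<longleftrightarrow> (\<forall>i\<in>{1..k}. 0 \<le> a i) \<and>
     (\<exists>f::nat \<Rightarrow> real^'n. tight_frame_real f k \<and> (\<forall>i\<in>{1..k}. norm (f i) = a i))"

definition tight_frame_set_complex :: "('n::finite) itself \<Rightarrow> nat \<Rightarrow> (nat \<Rightarrow> real) \<Rightarrow> bool" where
  "tight_frame_set_complex _ k a \<longleftrightarrow> (\<forall>i\<in>{1..k}. 0 \<le> a i) \<and>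
     (\<exists>f::nat \<Rightarrow> complex^'n. tight_frame_complex f k \<and> (\<forall>i\<in>{1..k}. norm (f i) = a i))"

end

theory Submission
  imports Defs
begin


lemma sum_two:
  assumes "finite I" "i \<in> I" "j \<in> I" "i \<noteq> j"
  shows "sum F I = F i + F j + sum F (I - {i, j})"
proof -
  have "sum F I = F i + sum F (I - {i})" using assms by (simp add: sum.remove)
  also have "sum F (I - {i}) = F j + sum F (I - {i} - {j})" using assms by (simp add: sum.remove)
  finally show ?thesis by (simp add: Diff_insert2[symmetric] insert_commute add.assoc)
qed

lemma sqrt_aux:
  fixes t s :: real
  assumes "0 \<le> t" "0 \<le> s" "s = 0 \<Longrightarrow> t = 0"
  shows "sqrt (t / s) * (sqrt (t / s) * s) = t"
proof (cases "s = 0")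
  case False
  then show ?thesis using assms by (simp add: mult.assoc[symmetric])
qed (use assms in simp)

lemma p_facts:
  fixes c a b :: real
  assumes wb: "0 \<le> a" "a \<le> c" "0 \<le> b" "b \<le> c" and wij: "c < a + b" and c0: "0 < c"
  shows "0 \<le> c * (c - b) / (2 * c - a - b) \<and> c * (c - b) / (2 * c - a - b) \<le> c \<and>
         c * (c - b) / (2 * c - a - b) \<le> a \<and> 0 \<le> b - c + c * (c - b) / (2 * c - a - b) \<and>
         c * (c - b) / (2 * c - a - b) * (a - c * (c - b) / (2 * c - a - b)) =
         (c - c * (c - b) / (2 * c - a - b)) * (b - c + c * (c - b) / (2 * c - a - b))"
proof (cases "2 * c - a - b = 0")
  case True
  then have "a = c" "b = c" using wb by auto
  then show ?thesis using True c0 by simp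
next
  case False
  define p where "p = c * (c - b) / (2 * c - a - b)"
  then have D: "2 * c - a - b > 0" using wb False by auto
  have pe: "p * (2 * c - a - b) = c * (c - b)" using D by (simp add: p_def)
  have 1: "0 \<le> p" using D wb c0 by (simp add: p_def)
  have 2: "p \<le> c" using D wb c0 by (simp add: p_def divide_le_eq)
  have 3: "p \<le> a"
  proof -
    have A0: "0 \<le> (c - a) * (a + b - c)" using wb wij by (intro mult_nonneg_nonneg) auto
    have "a * (2 * c - a - b) - c * (c - b) = (c - a) * (a + b - c)"
      by (simp add: algebra_simps)
    then have "c * (c - b) \<le> a * (2 * c - a - b)" using A0 by linarith
    then show ?thesis using D by (simp add: p_def divide_le_eq)
  qed
  have 4: "0 \<le> b - c + p"
  proof -
    have A0: "0 \<le> (c - b) * (a + b - c)" using wb wij by (intro mult_nonneg_nonneg) auto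
    have "c * (c - b) - (c - b) * (2 * c - a - b) = (c - b) * (a + b - c)"
      by (simp add: algebra_simps)
    then have "(c - b) * (2 * c - a - b) \<le> c * (c - b)" using A0 by linarith
    then have "c - b \<le> p" using D by (simp add: p_def le_divide_eq)
    then show ?thesis by simp
  qed
  have 5: "p * (a - p) = (c - p) * (b - c + p)"
  proof -
    have "p * (a - p) - (c - p) * (b - c + p) = p * (a + b - 2 * c) + c * (c - b)"
      by (simp add: algebra_simps)
    also have "\<dots> = 0" using pe by (simp add: algebra_simps)
    finally show ?thesis by simp
  qed
  show ?thesis using 1 2 3 4 5 unfolding p_def by blast
qed

lemma orth_span:
  assumes "z \<in> span S" "\<And>v. v \<in> S \<Longrightarrow> e \<bullet> v = 0"
  shows "e \<bullet> z = 0"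
  using orthogonal_to_span[OF assms(1), of e] assms(2) by (auto simp: orthogonal_def)

lemma frame_construct:
  fixes E :: "'a::real_inner list" and w :: "nat \<Rightarrow> real"
  assumes "distinct E" "\<forall>u\<in>set E. u \<bullet> u = 1" "\<forall>u\<in>set E. \<forall>v\<in>set E. u \<noteq> v \<longrightarrow> u \<bullet> v = 0"
    "finite I" "\<forall>i\<in>I. 0 \<le> w i \<and> w i \<le> c" "0 < c" "sum w I = real (length E) * c"
  shows "\<exists>f. (\<forall>i\<in>I. f i \<in> span (set E) \<and> f i \<bullet> f i = w i) \<and>
             (\<forall>x\<in>span (set E). (\<Sum>i\<in>I. (x \<bullet> f i)\<^sup>2) = c * (x \<bullet> x))"
  using assms
proof (induction "length E + card I" arbitrary: E I w rule: less_induct)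
  case less
  show ?case
  proof (cases E)
    case Nil
    then have "\<forall>i\<in>I. w i = 0" using less.prems sum_nonneg_eq_0_iff[of I w] by auto
    then show ?thesis using Nil by (intro exI[of _ "\<lambda>i. 0"]) auto
  next
    case (Cons e E')
    show ?thesis
    proof (cases "\<exists>i\<in>I. \<exists>j\<in>I. i \<noteq> j \<and> w i + w j \<le> c")
      case True
      then obtain i j where ij: "i \<in> I" "j \<in> I" "i \<noteq> j" "w i + w j \<le> c" by blast
      define s where "s = w i + w j"
      define w' where "w' = w(i := s)"
      have fin': "finite (I - {j})" using less.prems by auto
      have card': "card (I - {j}) < card I" using ij less.prems by (meson card_Diff1_less)
      have sum': "sum w' (I - {j}) = sum w I"
      proof -
        have "sum w' (I - {j}) = w' i + sum w' (I - {j} - {i})" using ij fin' by (simp add: sum.remove)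
        also have "sum w' (I - {j} - {i}) = sum w (I - {i, j})"
          unfolding w'_def by (intro sum.cong) (auto simp: Diff_insert2[symmetric])
        finally show ?thesis using sum_two[OF less.prems(4) ij(1-3), of w] by (simp add: w'_def s_def)
      qed
      have "\<forall>h\<in>I - {j}. 0 \<le> w' h \<and> w' h \<le> c" using less.prems ij by (auto simp: w'_def s_def)
      then obtain g where g1: "\<forall>h\<in>I - {j}. g h \<in> span (set E) \<and> g h \<bullet> g h = w' h"
        and g2: "\<forall>x\<in>span (set E). (\<Sum>h\<in>I - {j}. (x \<bullet> g h)\<^sup>2) = c * (x \<bullet> x)"
        using less.hyps[of E "I - {j}" w'] less.prems card' fin' sum' by auto
      have gi: "g i \<bullet> g i = s" using g1 ij by (auto simp: w'_def)
      define f where "f = g(i := sqrt (w i / s) *\<^sub>R g i, j := sqrt (w j / s) *\<^sub>R g i)"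
      have s0: "0 \<le> s" using less.prems ij by (auto simp: s_def)
      have wi0: "0 \<le> w i" "0 \<le> w j" using less.prems ij by auto
      have P1: "\<forall>h\<in>I. f h \<in> span (set E) \<and> f h \<bullet> f h = w h"
      proof
        fix h assume h: "h \<in> I"
        show "f h \<in> span (set E) \<and> f h \<bullet> f h = w h"
        proof (cases "h = i \<or> h = j")
          case True
          have gs: "g i \<in> span (set E)" using g1 ij by auto
          have "s = 0 \<Longrightarrow> w i = 0 \<and> w j = 0" using wi0 s_def by auto
          then show ?thesis using True gs gi ij s0 wi0 sqrt_aux[of "w i" s] sqrt_aux[of "w j" s]
            by (auto simp: f_def span_scale)
        next
          case False
          then show ?thesis using g1 h by (auto simp: f_def w'_def)
        qed
      qed
      have P2: "\<forall>x\<in>span (set E). (\<Sum>h\<in>I. (x \<bullet> f h)\<^sup>2) = c * (x \<bullet> x)"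
      proof
        fix x assume x: "x \<in> span (set E)"
        have e1: "(\<Sum>h\<in>I. (x \<bullet> f h)\<^sup>2) = (x \<bullet> f i)\<^sup>2 + (x \<bullet> f j)\<^sup>2 + (\<Sum>h\<in>I - {i,j}. (x \<bullet> g h)\<^sup>2)"
        proof -
          have "(\<Sum>h\<in>I - {i,j}. (x \<bullet> f h)\<^sup>2) = (\<Sum>h\<in>I - {i,j}. (x \<bullet> g h)\<^sup>2)"
            by (intro sum.cong) (auto simp: f_def)
          then show ?thesis using sum_two[OF less.prems(4) ij(1-3), of "\<lambda>h. (x \<bullet> f h)\<^sup>2"] by simp
        qed
        have e2: "(\<Sum>h\<in>I - {j}. (x \<bullet> g h)\<^sup>2) = (x \<bullet> g i)\<^sup>2 + (\<Sum>h\<in>I - {i,j}. (x \<bullet> g h)\<^sup>2)"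
          using fin' ij by (simp add: sum.remove Diff_insert2[symmetric] insert_commute)
        have e3: "(x \<bullet> f i)\<^sup>2 + (x \<bullet> f j)\<^sup>2 = (x \<bullet> g i)\<^sup>2"
        proof (cases "s = 0")
          case True
          then have "g i = 0" using gi by simp
          then show ?thesis using ij by (simp add: f_def)
        next
          case False
          then have "(x \<bullet> f i)\<^sup>2 + (x \<bullet> f j)\<^sup>2 = (w i / s + w j / s) * (x \<bullet> g i)\<^sup>2"
            using ij wi0 s0 by (simp add: f_def power_mult_distrib algebra_simps)
          also have "w i / s + w j / s = 1" using False by (simp add: s_def add_divide_distrib[symmetric])
          finally show ?thesis by simp
        qed
        show "(\<Sum>h\<in>I. (x \<bullet> f h)\<^sup>2) = c * (x \<bullet> x)" using e1 e2 e3 g2 x by simp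
      qed
      show ?thesis using P1 P2 by blast
    next
      case False
      have hE: "e \<notin> set E'" "distinct E'" "e \<bullet> e = 1" "\<forall>v\<in>set E'. e \<bullet> v = 0"
        "\<forall>u\<in>set E'. u \<bullet> u = 1" "\<forall>u\<in>set E'. \<forall>v\<in>set E'. u \<noteq> v \<longrightarrow> u \<bullet> v = 0"
        using less.prems Cons by auto
      have Ine: "I \<noteq> {}"
      proof
        assume "I = {}"
        then show False using less.prems Cons by simp
      qed
      show ?thesis
      proof (cases "card I = 1")
        case True
        then obtain i where Ii: "I = {i}" by (auto simp: card_Suc_eq)
        have "w i = (1 + real (length E')) * c" using less.prems Cons Ii by simp
        moreover have "w i \<le> c" using less.prems Ii by auto
        ultimately have "real (length E') * c \<le> 0" by (simp add: algebra_simps)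
        then have "real (length E') \<le> 0" using less.prems(6) by (simp add: mult_le_0_iff)
        then have "length E' = 0" by simp
        then have E'0: "E' = []" by simp
        have wi: "w i = c" using less.prems Cons Ii E'0 by simp
        define f where "f = (\<lambda>h::nat. sqrt c *\<^sub>R e)"
        have P1: "\<forall>h\<in>I. f h \<in> span (set E) \<and> f h \<bullet> f h = w h"
          using Ii wi hE less.prems Cons by (auto simp: f_def span_base span_scale)
        have P2: "\<forall>x\<in>span (set E). (\<Sum>h\<in>I. (x \<bullet> f h)\<^sup>2) = c * (x \<bullet> x)"
        proof
          fix x assume "x \<in> span (set E)"
          then obtain k where "x = k *\<^sub>R e" using Cons E'0 by (auto simp: span_singleton)
          then show "(\<Sum>h\<in>I. (x \<bullet> f h)\<^sup>2) = c * (x \<bullet> x)"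
            using Ii hE less.prems by (simp add: f_def power_mult_distrib power2_eq_square)
        qed
        show ?thesis using P1 P2 by blast
      next
        case False
        have "card I > 0" using Ine less.prems(4) by (simp add: card_gt_0_iff)
        then have "card I \<ge> 2" using False by linarith
        then obtain i j where ij: "i \<in> I" "j \<in> I" "i \<noteq> j"
          by (metis One_nat_def card_le_Suc0_iff_eq not_less_eq_eq numeral_2_eq_2 less.prems(4))
        have wij: "w i + w j > c" using ij \<open>\<not> (\<exists>i\<in>I. \<exists>j\<in>I. i \<noteq> j \<and> w i + w j \<le> c)\<close> by force
        have wb: "0 \<le> w i" "w i \<le> c" "0 \<le> w j" "w j \<le> c" using less.prems ij by auto
        define d where "d = w i + w j - c"
        define w' where "w' = w(i := d)"
        have dle: "0 \<le> d" "d \<le> c" using wb wij by (auto simp: d_def)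
        have fin': "finite (I - {j})" using less.prems by auto
        have card': "card (I - {j}) < card I" using ij less.prems by (meson card_Diff1_less)
        have sum': "sum w' (I - {j}) = real (length E') * c"
        proof -
          have "sum w' (I - {j}) = w' i + sum w' (I - {j} - {i})" using ij fin' by (simp add: sum.remove)
          also have "sum w' (I - {j} - {i}) = sum w (I - {i, j})"
            unfolding w'_def by (intro sum.cong) (auto simp: Diff_insert2[symmetric])
          finally show ?thesis using sum_two[OF less.prems(4) ij(1-3), of w] less.prems(7) Cons
            by (simp add: w'_def d_def algebra_simps)
        qed
        have "\<forall>h\<in>I - {j}. 0 \<le> w' h \<and> w' h \<le> c" using less.prems ij dle by (auto simp: w'_def)
        then obtain g where g1: "\<forall>h\<in>I - {j}. g h \<in> span (set E') \<and> g h \<bullet> g h = w' h"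
          and g2: "\<forall>x\<in>span (set E'). (\<Sum>h\<in>I - {j}. (x \<bullet> g h)\<^sup>2) = c * (x \<bullet> x)"
          using less.hyps[of E' "I - {j}" w'] hE card' fin' sum' less.prems Cons by auto
        have gi: "g i \<bullet> g i = d" using g1 ij by (auto simp: w'_def)
        have gis: "g i \<in> span (set E')" using g1 ij by auto
        have eorth: "\<And>z. z \<in> span (set E') \<Longrightarrow> e \<bullet> z = 0" using orth_span hE(4) by blast
        define p where "p = c * (c - w j) / (2 * c - w i - w j)"
        have pb: "0 \<le> p" "p \<le> c" "p \<le> w i" "0 \<le> w j - c + p"
          and peq: "p * (w i - p) = (c - p) * (w j - c + p)"
          using p_facts[of "w i" c "w j"] wb wij less.prems(6) unfolding p_def by auto
        define x1 where "x1 = sqrt p"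
        define x2 where "x2 = sqrt (c - p)"
        define y1 where "y1 = sqrt (w i - p)"
        define y2 where "y2 = sqrt (w j - c + p)"
        have xx: "x1\<^sup>2 = p" "x2\<^sup>2 = c - p" "y1\<^sup>2 = w i - p" "y2\<^sup>2 = w j - c + p"
          using pb by (auto simp: x1_def x2_def y1_def y2_def)
        have xy: "x1 * y1 = x2 * y2" using peq by (simp add: x1_def x2_def y1_def y2_def real_sqrt_mult[symmetric])
        have yd: "y1\<^sup>2 + y2\<^sup>2 = d" using xx by (simp add: d_def)
        define al where "al = y1 / sqrt d"
        define be where "be = y2 / sqrt d"
        have d0: "0 \<le> d" using wij by (simp add: d_def)
        define f where "f = g(i := x1 *\<^sub>R e + al *\<^sub>R g i, j := x2 *\<^sub>R e - be *\<^sub>R g i)"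
        have spanE: "span (set E') \<subseteq> span (set E)" using Cons by (simp add: span_mono subset_insertI)
        have eE: "e \<in> span (set E)" using Cons by (simp add: span_base)
        have egi: "e \<bullet> g i = 0" using eorth gis by blast
        have P1: "\<forall>h\<in>I. f h \<in> span (set E) \<and> f h \<bullet> f h = w h"
        proof
          fix h assume h: "h \<in> I"
          show "f h \<in> span (set E) \<and> f h \<bullet> f h = w h"
          proof (cases "h = i \<or> h = j")
            case True
            have gE: "g i \<in> span (set E)" using gis spanE by auto
            have n1: "(x1 *\<^sub>R e + al *\<^sub>R g i) \<bullet> (x1 *\<^sub>R e + al *\<^sub>R g i) = x1\<^sup>2 + al\<^sup>2 * d"
              using hE(3) egi gi by (simp add: inner_add_left inner_add_right inner_commute power2_eq_square)
            have n2: "(x2 *\<^sub>R e - be *\<^sub>R g i) \<bullet> (x2 *\<^sub>R e - be *\<^sub>R g i) = x2\<^sup>2 + be\<^sup>2 * d"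
              using hE(3) egi gi by (simp add: inner_diff_left inner_diff_right inner_commute power2_eq_square)
            have a1: "al\<^sup>2 * d = y1\<^sup>2 \<and> be\<^sup>2 * d = y2\<^sup>2"
            proof (cases "d = 0")
              case True
              then have "y1 = 0" "y2 = 0" using yd by (auto simp: add_nonneg_eq_0_iff)
              then show ?thesis using True by (auto simp: al_def be_def)
            next
              case False
              then show ?thesis using d0 by (auto simp: al_def be_def power_divide)
            qed
            show ?thesis using True n1 n2 a1 xx gE eE ij
              by (auto simp: f_def span_add span_diff span_scale)
          next
            case False
            then show ?thesis using g1 h spanE by (auto simp: f_def w'_def)
          qed
        qed
        have P2: "\<forall>x\<in>span (set E). (\<Sum>h\<in>I. (x \<bullet> f h)\<^sup>2) = c * (x \<bullet> x)"
        proof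
          fix x assume x: "x \<in> span (set E)"
          define t where "t = x \<bullet> e"
          define z where "z = x - t *\<^sub>R e"
          obtain k where k: "x - k *\<^sub>R e \<in> span (set E')" using x Cons by (auto simp: span_breakdown_eq)
          have "t = k"
          proof -
            have "e \<bullet> (x - k *\<^sub>R e) = 0" using eorth k by blast
            then show ?thesis using hE(3) by (simp add: t_def inner_diff_right inner_commute)
          qed
          then have zs: "z \<in> span (set E')" using k by (simp add: z_def)
          have xz: "x = t *\<^sub>R e + z" by (simp add: z_def)
          have ez: "e \<bullet> z = 0" using eorth zs by blast
          have xx2: "x \<bullet> x = t\<^sup>2 + z \<bullet> z" using ez hE(3) unfolding xz
            by (simp add: inner_add_left inner_add_right inner_commute power2_eq_square)
          have xg: "\<And>h. h \<in> I - {j} \<Longrightarrow> x \<bullet> g h = z \<bullet> g h"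
          proof -
            fix h assume "h \<in> I - {j}"
            then have "e \<bullet> g h = 0" using g1 eorth by blast
            then show "x \<bullet> g h = z \<bullet> g h" unfolding xz by (simp add: inner_add_left)
          qed
          define sv where "sv = z \<bullet> g i"
          have xfi: "x \<bullet> f i = t * x1 + al * sv" using ij egi ez hE(3) unfolding xz
            by (simp add: f_def sv_def inner_add_left inner_add_right inner_commute)
          have xfj: "x \<bullet> f j = t * x2 - be * sv" using ij egi ez hE(3) unfolding xz
            by (simp add: f_def sv_def inner_add_left inner_add_right inner_diff_right inner_commute)
          have e1: "(\<Sum>h\<in>I. (x \<bullet> f h)\<^sup>2) = (x \<bullet> f i)\<^sup>2 + (x \<bullet> f j)\<^sup>2 + (\<Sum>h\<in>I - {i,j}. (z \<bullet> g h)\<^sup>2)"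
          proof -
            have "(\<Sum>h\<in>I - {i,j}. (x \<bullet> f h)\<^sup>2) = (\<Sum>h\<in>I - {i,j}. (z \<bullet> g h)\<^sup>2)"
              by (intro sum.cong) (auto simp: f_def xg)
            then show ?thesis using sum_two[OF less.prems(4) ij(1-3), of "\<lambda>h. (x \<bullet> f h)\<^sup>2"] by simp
          qed
          have e2: "(\<Sum>h\<in>I - {j}. (z \<bullet> g h)\<^sup>2) = sv\<^sup>2 + (\<Sum>h\<in>I - {i,j}. (z \<bullet> g h)\<^sup>2)"
            using fin' ij by (simp add: sum.remove Diff_insert2[symmetric] insert_commute sv_def)
          have cross: "x1 * al - x2 * be = 0" using xy by (simp add: al_def be_def diff_divide_distrib[symmetric])
          have sq: "sv\<^sup>2 * (al\<^sup>2 + be\<^sup>2) = sv\<^sup>2"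
          proof (cases "d = 0")
            case True
            then have "g i = 0" using gi by simp
            then show ?thesis by (simp add: sv_def)
          next
            case False
            then have "al\<^sup>2 + be\<^sup>2 = 1" using d0 yd by (simp add: al_def be_def power_divide add_divide_distrib[symmetric])
            then show ?thesis by simp
          qed
          have e3: "(x \<bullet> f i)\<^sup>2 + (x \<bullet> f j)\<^sup>2 = c * t\<^sup>2 + sv\<^sup>2"
          proof -
            have "(x \<bullet> f i)\<^sup>2 + (x \<bullet> f j)\<^sup>2 = t\<^sup>2 * (x1\<^sup>2 + x2\<^sup>2) + 2 * t * sv * (x1 * al - x2 * be) + sv\<^sup>2 * (al\<^sup>2 + be\<^sup>2)"
              unfolding xfi xfj by (simp add: power2_eq_square algebra_simps)
            then show ?thesis using cross sq xx by simp
          qed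
          show "(\<Sum>h\<in>I. (x \<bullet> f h)\<^sup>2) = c * (x \<bullet> x)"
            using e1 e2 e3 g2 zs xx2 by (simp add: algebra_simps)
        qed
        show ?thesis using P1 P2 by blast
      qed
    qed
  qed
qed



lemma vec_norm_sq:
  fixes x :: "'a::real_normed_vector^'n"
  shows "(norm x)\<^sup>2 = (\<Sum>j\<in>UNIV. (norm (x$j))\<^sup>2)"
  unfolding norm_vec_def L2_set_def by (simp add: sum_nonneg)

lemma cinner_self: "cinner_vec x x = complex_of_real ((norm x)\<^sup>2)"
  unfolding cinner_vec_def vec_norm_sq by (simp add: complex_norm_square[symmetric])

lemma cinner_axis: "cinner_vec (axis l 1) y = cnj (y $ l)"
proof -
  have "cinner_vec (axis l 1) y = (\<Sum>j\<in>UNIV. if j = l then cnj (y $ j) else 0)"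
    unfolding cinner_vec_def axis_def by (intro sum.cong) auto
  then show ?thesis by simp
qed

lemma norm_axis1: "norm (axis l (1::complex) :: complex^'n) = 1"
proof -
  have "(\<Sum>j\<in>UNIV. (norm ((axis l (1::complex) :: complex^'n) $ j))\<^sup>2) = (\<Sum>j\<in>UNIV. if j = l then 1 else 0)"
    by (intro sum.cong) (auto simp: axis_def)
  then have "(norm (axis l (1::complex) :: complex^'n))\<^sup>2 = 1" unfolding vec_norm_sq by simp
  then show ?thesis by (simp add: power2_eq_1_iff)
qed

lemma card_Basis_cart: "card (Basis :: (real^'n) set) = CARD('n)"
  using DIM_cart[where 'a=real and 'b='n] by simp



lemma real_suff:
  fixes a :: "nat \<Rightarrow> real"
  assumes a0: "\<forall>i\<in>{1..k}. 0 \<le> a i" and S0: "0 < (\<Sum>i=1..k. (a i)\<^sup>2)"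
    and ab: "\<forall>i\<in>{1..k}. real CARD('n) * (a i)\<^sup>2 \<le> (\<Sum>i=1..k. (a i)\<^sup>2)"
  shows "\<exists>f::nat \<Rightarrow> real^'n. \<exists>c>0. (\<forall>x. (\<Sum>i=1..k. (x \<bullet> f i)\<^sup>2) = c * (norm x)\<^sup>2) \<and> (\<forall>i\<in>{1..k}. norm (f i) = a i)"
proof -
  define S where "S = (\<Sum>i=1..k. (a i)\<^sup>2)"
  obtain E :: "(real^'n) list" where E: "set E = Basis" "distinct E"
    using finite_distinct_list[OF finite_Basis] by blast
  have len: "length E = CARD('n)" using E distinct_card card_Basis_cart by metis
  define c where "c = S / real CARD('n)"
  have n0: "0 < real CARD('n)" by simp
  have c0: "0 < c" using S0 n0 by (simp add: c_def S_def)
  have wb: "\<forall>i\<in>{1..k}. 0 \<le> (a i)\<^sup>2 \<and> (a i)\<^sup>2 \<le> c"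
    using ab n0 by (auto simp: c_def S_def le_divide_eq mult.commute)
  have sm: "(\<Sum>i\<in>{1..k}. (a i)\<^sup>2) = real (length E) * c" using len n0 by (simp add: c_def S_def)
  have o1: "\<forall>u\<in>set E. u \<bullet> u = 1" using E by (simp add: inner_Basis)
  have o2: "\<forall>u\<in>set E. \<forall>v\<in>set E. u \<noteq> v \<longrightarrow> u \<bullet> v = 0" using E by (simp add: inner_Basis)
  obtain f where f1: "\<forall>i\<in>{1..k}. f i \<in> span (set E) \<and> f i \<bullet> f i = (a i)\<^sup>2"
    and f2: "\<forall>x\<in>span (set E). (\<Sum>i\<in>{1..k}. (x \<bullet> f i)\<^sup>2) = c * (x \<bullet> x)"
    using frame_construct[OF E(2) o1 o2 finite_atLeastAtMost wb c0 sm] by blast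
  have "\<forall>x. (\<Sum>i=1..k. (x \<bullet> f i)\<^sup>2) = c * (norm x)\<^sup>2"
    using f2 E by (simp add: power2_norm_eq_inner)
  moreover have "\<forall>i\<in>{1..k}. norm (f i) = a i"
    using f1 a0 by (simp add: norm_eq_sqrt_inner)
  ultimately show ?thesis using c0 by blast
qed

lemma real_nec:
  fixes f :: "nat \<Rightarrow> real^'n"
  assumes c0: "c > 0" and fr: "\<forall>x. (\<Sum>i=1..k. (x \<bullet> f i)\<^sup>2) = c * (norm x)\<^sup>2"
  shows "(\<Sum>i=1..k. (norm (f i))\<^sup>2) = real CARD('n) * c" "\<forall>j\<in>{1..k}. (norm (f j))\<^sup>2 \<le> c"
proof -
  have "(\<Sum>i=1..k. (norm (f i))\<^sup>2) = (\<Sum>i=1..k. \<Sum>b\<in>Basis. (b \<bullet> f i)\<^sup>2)"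
  proof (intro sum.cong refl)
    fix i
    have "(norm (f i))\<^sup>2 = f i \<bullet> f i" by (rule power2_norm_eq_inner)
    also have "\<dots> = (\<Sum>b\<in>Basis. (f i \<bullet> b) * (f i \<bullet> b))" by (rule euclidean_inner)
    finally show "(norm (f i))\<^sup>2 = (\<Sum>b\<in>Basis. (b \<bullet> f i)\<^sup>2)" by (simp add: power2_eq_square inner_commute)
  qed
  also have "\<dots> = (\<Sum>b\<in>Basis. \<Sum>i=1..k. (b \<bullet> f i)\<^sup>2)" by (rule sum.swap)
  also have "\<dots> = (\<Sum>b\<in>(Basis::(real^'n) set). c)" using fr by (intro sum.cong refl) simp
  also have "\<dots> = real CARD('n) * c" using card_Basis_cart by simp
  finally show "(\<Sum>i=1..k. (norm (f i))\<^sup>2) = real CARD('n) * c" .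
  show "\<forall>j\<in>{1..k}. (norm (f j))\<^sup>2 \<le> c"
  proof
    fix j assume j: "j \<in> {1..k}"
    have "(f j \<bullet> f j)\<^sup>2 \<le> (\<Sum>i=1..k. (f j \<bullet> f i)\<^sup>2)"
      using j by (intro member_le_sum) auto
    also have "\<dots> = c * (norm (f j))\<^sup>2" using fr by simp
    finally have le: "(norm (f j))\<^sup>2 * (norm (f j))\<^sup>2 \<le> c * (norm (f j))\<^sup>2"
      by (simp only: power2_norm_eq_inner[symmetric] power2_eq_square)
    show "(norm (f j))\<^sup>2 \<le> c"
    proof (cases "norm (f j) = 0")
      case True then show ?thesis using c0 by simp
    next
      case False
      then have "(norm (f j))\<^sup>2 > 0" by simp
      then show ?thesis using mult_right_le_imp_le[OF le] by blast
    qed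
  qed
qed

lemma cplx_nec:
  fixes f :: "nat \<Rightarrow> complex^'n"
  assumes c0: "c > 0" and fr: "\<forall>x. (\<Sum>i=1..k. (cmod (cinner_vec x (f i)))\<^sup>2) = c * (norm x)\<^sup>2"
  shows "(\<Sum>i=1..k. (norm (f i))\<^sup>2) = real CARD('n) * c" "\<forall>j\<in>{1..k}. (norm (f j))\<^sup>2 \<le> c"
proof -
  have "(\<Sum>i=1..k. (norm (f i))\<^sup>2) = (\<Sum>i=1..k. \<Sum>l\<in>UNIV. (cmod (cinner_vec (axis l 1) (f i)))\<^sup>2)"
    by (intro sum.cong refl) (simp add: vec_norm_sq cinner_axis)
  also have "\<dots> = (\<Sum>l\<in>UNIV. \<Sum>i=1..k. (cmod (cinner_vec (axis l 1) (f i)))\<^sup>2)" by (rule sum.swap)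
  also have "\<dots> = (\<Sum>l\<in>(UNIV::'n set). c)" using fr norm_axis1 by (intro sum.cong refl) simp
  also have "\<dots> = real CARD('n) * c" by simp
  finally show "(\<Sum>i=1..k. (norm (f i))\<^sup>2) = real CARD('n) * c" .
  show "\<forall>j\<in>{1..k}. (norm (f j))\<^sup>2 \<le> c"
  proof
    fix j assume j: "j \<in> {1..k}"
    have "(cmod (cinner_vec (f j) (f j)))\<^sup>2 \<le> (\<Sum>i=1..k. (cmod (cinner_vec (f j) (f i)))\<^sup>2)"
      using j by (intro member_le_sum) auto
    also have "\<dots> = c * (norm (f j))\<^sup>2" using fr by simp
    moreover have "cmod (cinner_vec (f j) (f j)) = (norm (f j))\<^sup>2" unfolding cinner_self norm_of_real by simp
    ultimately have le: "(norm (f j))\<^sup>2 * (norm (f j))\<^sup>2 \<le> c * (norm (f j))\<^sup>2"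
      by (simp add: power2_eq_square)
    show "(norm (f j))\<^sup>2 \<le> c"
    proof (cases "norm (f j) = 0")
      case True then show ?thesis using c0 by simp
    next
      case False
      then have "(norm (f j))\<^sup>2 > 0" by simp
      then show ?thesis using mult_right_le_imp_le[OF le] by blast
    qed
  qed
qed

lemma cplx_from_real:
  fixes f :: "nat \<Rightarrow> real^'n"
  assumes fr: "\<forall>x. (\<Sum>i=1..k. (x \<bullet> f i)\<^sup>2) = c * (norm x)\<^sup>2"
  defines "F \<equiv> \<lambda>i. (\<chi> j. complex_of_real (f i $ j))"
  shows "\<forall>x. (\<Sum>i=1..k. (cmod (cinner_vec x (F i)))\<^sup>2) = c * (norm x)\<^sup>2"
    "\<And>i. norm (F i) = norm (f i)"
proof -
  show "\<And>i. norm (F i) = norm (f i)"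
  proof -
    fix i
    have "(norm (F i))\<^sup>2 = (norm (f i))\<^sup>2" unfolding vec_norm_sq by (simp add: F_def)
    then show "norm (F i) = norm (f i)" by (simp add: power2_eq_iff_nonneg)
  qed
  show "\<forall>x. (\<Sum>i=1..k. (cmod (cinner_vec x (F i)))\<^sup>2) = c * (norm x)\<^sup>2"
  proof
    fix x :: "complex^'n"
    define xr :: "real^'n" where "xr = (\<chi> j. Re (x $ j))"
    define xi :: "real^'n" where "xi = (\<chi> j. Im (x $ j))"
    have ci: "\<And>i. (cmod (cinner_vec x (F i)))\<^sup>2 = (xr \<bullet> f i)\<^sup>2 + (xi \<bullet> f i)\<^sup>2"
    proof -
      fix i
      have "Re (cinner_vec x (F i)) = xr \<bullet> f i"
        by (simp add: cinner_vec_def F_def xr_def inner_vec_def Re_sum)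
      moreover have "Im (cinner_vec x (F i)) = xi \<bullet> f i"
        by (simp add: cinner_vec_def F_def xi_def inner_vec_def Im_sum)
      ultimately show "(cmod (cinner_vec x (F i)))\<^sup>2 = (xr \<bullet> f i)\<^sup>2 + (xi \<bullet> f i)\<^sup>2"
        by (simp add: cmod_power2)
    qed
    have nx: "(norm x)\<^sup>2 = (norm xr)\<^sup>2 + (norm xi)\<^sup>2"
      unfolding vec_norm_sq by (simp add: xr_def xi_def cmod_power2 sum.distrib)
    show "(\<Sum>i=1..k. (cmod (cinner_vec x (F i)))\<^sup>2) = c * (norm x)\<^sup>2"
      using fr by (simp add: ci sum.distrib nx algebra_simps)
  qed
qed



lemma char_real:
  "tight_frame_set_real TYPE('n::finite) k a \<longleftrightarrow> (\<forall>i\<in>{1..k}. 0 \<le> a i) \<and> 0 < (\<Sum>i=1..k. (a i)\<^sup>2)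
     \<and> (\<forall>i\<in>{1..k}. real CARD('n) * (a i)\<^sup>2 \<le> (\<Sum>i=1..k. (a i)\<^sup>2))"
proof
  assume "tight_frame_set_real TYPE('n::finite) k a"
  then obtain f :: "nat \<Rightarrow> real^'n" and c where a0: "\<forall>i\<in>{1..k}. 0 \<le> a i" and c0: "c > 0"
    and fr: "\<forall>x. (\<Sum>i=1..k. (x \<bullet> f i)\<^sup>2) = c * (norm x)\<^sup>2" and nf: "\<forall>i\<in>{1..k}. norm (f i) = a i"
    unfolding tight_frame_set_real_def tight_frame_real_def by blast
  have S: "(\<Sum>i=1..k. (a i)\<^sup>2) = real CARD('n) * c"
  proof -
    have "(\<Sum>i=1..k. (a i)\<^sup>2) = (\<Sum>i=1..k. (norm (f i))\<^sup>2)" using nf by (intro sum.cong) auto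
    then show ?thesis using real_nec(1)[OF c0 fr] by simp
  qed
  have B: "\<forall>j\<in>{1..k}. (a j)\<^sup>2 \<le> c" using real_nec(2)[OF c0 fr] nf by simp
  show "(\<forall>i\<in>{1..k}. 0 \<le> a i) \<and> 0 < (\<Sum>i=1..k. (a i)\<^sup>2)
     \<and> (\<forall>i\<in>{1..k}. real CARD('n) * (a i)\<^sup>2 \<le> (\<Sum>i=1..k. (a i)\<^sup>2))"
    using a0 S B c0 by simp
next
  assume H: "(\<forall>i\<in>{1..k}. 0 \<le> a i) \<and> 0 < (\<Sum>i=1..k. (a i)\<^sup>2)
     \<and> (\<forall>i\<in>{1..k}. real CARD('n) * (a i)\<^sup>2 \<le> (\<Sum>i=1..k. (a i)\<^sup>2))"
  then obtain f :: "nat \<Rightarrow> real^'n" and c where "c > 0"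
    "\<forall>x. (\<Sum>i=1..k. (x \<bullet> f i)\<^sup>2) = c * (norm x)\<^sup>2" "\<forall>i\<in>{1..k}. norm (f i) = a i"
    using real_suff[of k a] by blast
  then show "tight_frame_set_real TYPE('n::finite) k a"
    using H unfolding tight_frame_set_real_def tight_frame_real_def by blast
qed

lemma char_complex:
  "tight_frame_set_complex TYPE('n::finite) k a \<longleftrightarrow> (\<forall>i\<in>{1..k}. 0 \<le> a i) \<and> 0 < (\<Sum>i=1..k. (a i)\<^sup>2)
     \<and> (\<forall>i\<in>{1..k}. real CARD('n) * (a i)\<^sup>2 \<le> (\<Sum>i=1..k. (a i)\<^sup>2))"
proof
  assume "tight_frame_set_complex TYPE('n::finite) k a"
  then obtain f :: "nat \<Rightarrow> complex^'n" and c where a0: "\<forall>i\<in>{1..k}. 0 \<le> a i" and c0: "c > 0"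
    and fr: "\<forall>x. (\<Sum>i=1..k. (cmod (cinner_vec x (f i)))\<^sup>2) = c * (norm x)\<^sup>2" and nf: "\<forall>i\<in>{1..k}. norm (f i) = a i"
    unfolding tight_frame_set_complex_def tight_frame_complex_def by blast
  have S: "(\<Sum>i=1..k. (a i)\<^sup>2) = real CARD('n) * c"
  proof -
    have "(\<Sum>i=1..k. (a i)\<^sup>2) = (\<Sum>i=1..k. (norm (f i))\<^sup>2)" using nf by (intro sum.cong) auto
    then show ?thesis using cplx_nec(1)[OF c0 fr] by simp
  qed
  have B: "\<forall>j\<in>{1..k}. (a j)\<^sup>2 \<le> c" using cplx_nec(2)[OF c0 fr] nf by simp
  show "(\<forall>i\<in>{1..k}. 0 \<le> a i) \<and> 0 < (\<Sum>i=1..k. (a i)\<^sup>2)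
     \<and> (\<forall>i\<in>{1..k}. real CARD('n) * (a i)\<^sup>2 \<le> (\<Sum>i=1..k. (a i)\<^sup>2))"
    using a0 S B c0 by simp
next
  assume H: "(\<forall>i\<in>{1..k}. 0 \<le> a i) \<and> 0 < (\<Sum>i=1..k. (a i)\<^sup>2)
     \<and> (\<forall>i\<in>{1..k}. real CARD('n) * (a i)\<^sup>2 \<le> (\<Sum>i=1..k. (a i)\<^sup>2))"
  then obtain f :: "nat \<Rightarrow> real^'n" and c where c0: "c > 0" and
    fr: "\<forall>x. (\<Sum>i=1..k. (x \<bullet> f i)\<^sup>2) = c * (norm x)\<^sup>2" and nf: "\<forall>i\<in>{1..k}. norm (f i) = a i"
    using real_suff[of k a] by blast
  define F where "F = (\<lambda>i. (\<chi> j. complex_of_real (f i $ j)))"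
  have "\<forall>x. (\<Sum>i=1..k. (cmod (cinner_vec x (F i)))\<^sup>2) = c * (norm x)\<^sup>2" "\<And>i. norm (F i) = norm (f i)"
    using cplx_from_real[OF fr] unfolding F_def by auto
  then show "tight_frame_set_complex TYPE('n::finite) k a"
    using H c0 nf unfolding tight_frame_set_complex_def tight_frame_complex_def by (intro conjI exI[of _ F]) auto
qed

lemma arith_part:
  fixes a :: "nat \<Rightarrow> real" and N b :: real
  assumes N2: "2 \<le> N" and b0: "0 \<le> b"
    and P: "(\<forall>i\<in>{1..k}. 0 \<le> a i) \<and> 0 < (\<Sum>i=1..k. (a i)\<^sup>2) \<and> (\<forall>i\<in>{1..k}. N * (a i)\<^sup>2 \<le> (\<Sum>i=1..k. (a i)\<^sup>2))"
  shows "((\<forall>i\<in>{1..k}. 0 \<le> (a(1:=b)) i) \<and> 0 < (\<Sum>i=1..k. ((a(1:=b)) i)\<^sup>2) \<and>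
          (\<forall>i\<in>{1..k}. N * ((a(1:=b)) i)\<^sup>2 \<le> (\<Sum>i=1..k. ((a(1:=b)) i)\<^sup>2)))
     \<longleftrightarrow> b\<^sup>2 \<in> {N * Max ((\<lambda>i. (a i)\<^sup>2) ` {2..k}) - (\<Sum>i=2..k. (a i)\<^sup>2) .. (\<Sum>i=2..k. (a i)\<^sup>2) / (N - 1)}"
proof -
  define T where "T = (\<Sum>i=2..k. (a i)\<^sup>2)"
  define M where "M = Max ((\<lambda>i. (a i)\<^sup>2) ` {2..k})"
  have k1: "1 \<le> k"
  proof (rule ccontr)
    assume "\<not> 1 \<le> k"
    then have "k = 0" by simp
    then show False using P by simp
  qed
  have split: "\<And>g. (\<Sum>i=1..k. g i) = g 1 + (\<Sum>i=2..k. g i)"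
    using k1 by (simp add: sum.atLeast_Suc_atMost numeral_2_eq_2)
  have S: "(\<Sum>i=1..k. (a i)\<^sup>2) = (a 1)\<^sup>2 + T" using split unfolding T_def by blast
  have T0: "0 \<le> T" unfolding T_def by (simp add: sum_nonneg)
  have a1: "N * (a 1)\<^sup>2 \<le> (a 1)\<^sup>2 + T" using P k1 S by auto
  have Tpos: "0 < T"
  proof (rule ccontr)
    assume "\<not> 0 < T"
    then have "T = 0" using T0 by simp
    then have "(N - 1) * (a 1)\<^sup>2 \<le> 0" using a1 by (simp add: algebra_simps)
    then have "(a 1)\<^sup>2 \<le> 0" using N2 by (simp add: mult_le_0_iff)
    then show False using P S \<open>T = 0\<close> by simp
  qed
  have k2: "2 \<le> k"
  proof (rule ccontr)
    assume "\<not> 2 \<le> k"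
    then have "T = 0" unfolding T_def by simp
    then show False using Tpos by simp
  qed
  have fin: "finite ((\<lambda>i. (a i)\<^sup>2) ` {2..k})" and ne: "(\<lambda>i. (a i)\<^sup>2) ` {2..k} \<noteq> {}" using k2 by auto
  have Mge: "\<forall>i\<in>{2..k}. (a i)\<^sup>2 \<le> M" unfolding M_def using fin by auto
  obtain i0 where i0: "i0 \<in> {2..k}" "M = (a i0)\<^sup>2" unfolding M_def using Max_in[OF fin ne] by auto
  have S': "(\<Sum>i=1..k. ((a(1:=b)) i)\<^sup>2) = b\<^sup>2 + T"
  proof -
    have "(\<Sum>i=2..k. ((a(1:=b)) i)\<^sup>2) = T" unfolding T_def by (intro sum.cong) auto
    then show ?thesis using split[of "\<lambda>i. ((a(1:=b)) i)\<^sup>2"] by simp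
  qed
  have N1: "0 < N - 1" using N2 by simp
  have iff1: "(N * b\<^sup>2 \<le> b\<^sup>2 + T) \<longleftrightarrow> b\<^sup>2 \<le> T / (N - 1)"
    using N1 by (simp add: le_divide_eq algebra_simps)
  have iff2: "(\<forall>i\<in>{2..k}. N * (a i)\<^sup>2 \<le> b\<^sup>2 + T) \<longleftrightarrow> N * M - T \<le> b\<^sup>2"
  proof
    assume "\<forall>i\<in>{2..k}. N * (a i)\<^sup>2 \<le> b\<^sup>2 + T"
    then have "N * (a i0)\<^sup>2 \<le> b\<^sup>2 + T" using i0 by blast
    then show "N * M - T \<le> b\<^sup>2" using i0 by simp
  next
    assume H: "N * M - T \<le> b\<^sup>2"
    show "\<forall>i\<in>{2..k}. N * (a i)\<^sup>2 \<le> b\<^sup>2 + T"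
    proof
      fix i assume "i \<in> {2..k}"
      then have "N * (a i)\<^sup>2 \<le> N * M" using Mge N2 by (intro mult_left_mono) auto
      then show "N * (a i)\<^sup>2 \<le> b\<^sup>2 + T" using H by simp
    qed
  qed
  have L: "((\<forall>i\<in>{1..k}. 0 \<le> (a(1:=b)) i) \<and> 0 < (\<Sum>i=1..k. ((a(1:=b)) i)\<^sup>2) \<and>
          (\<forall>i\<in>{1..k}. N * ((a(1:=b)) i)\<^sup>2 \<le> (\<Sum>i=1..k. ((a(1:=b)) i)\<^sup>2)))
     \<longleftrightarrow> (N * b\<^sup>2 \<le> b\<^sup>2 + T) \<and> (\<forall>i\<in>{2..k}. N * (a i)\<^sup>2 \<le> b\<^sup>2 + T)"
  proof -
    have A: "(\<forall>i\<in>{1..k}. 0 \<le> (a(1:=b)) i)" using P b0 by auto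
    have B: "0 < b\<^sup>2 + T" using Tpos by (simp add: add_nonneg_pos)
    have C: "(\<forall>i\<in>{1..k}. N * ((a(1:=b)) i)\<^sup>2 \<le> b\<^sup>2 + T) \<longleftrightarrow>
         (N * b\<^sup>2 \<le> b\<^sup>2 + T) \<and> (\<forall>i\<in>{2..k}. N * (a i)\<^sup>2 \<le> b\<^sup>2 + T)"
    proof -
      have "{1..k} = insert 1 {2..k}" using k1 by auto
      then show ?thesis by auto
    qed
    show ?thesis using A B C S' by simp
  qed
  show ?thesis unfolding L iff1 iff2 by (auto simp: T_def M_def)
qed


theorem theorem4p2:
  fixes a :: "nat \<Rightarrow> real" and b :: real and k :: nat
  assumes "2 \<le> CARD('n::finite)"
    and "0 \<le> b"
  shows
   "(tight_frame_set_real TYPE('n) k a \<longrightarrow>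
      (tight_frame_set_real TYPE('n) k (a(1 := b)) \<longleftrightarrow>
        b\<^sup>2 \<in> {real CARD('n) * Max ((\<lambda>i. (a i)\<^sup>2) ` {2..k}) - (\<Sum>i=2..k. (a i)\<^sup>2) ..
               (\<Sum>i=2..k. (a i)\<^sup>2) / (real CARD('n) - 1)}))
  \<and> (tight_frame_set_complex TYPE('n) k a \<longrightarrow>
      (tight_frame_set_complex TYPE('n) k (a(1 := b)) \<longleftrightarrow>
        b\<^sup>2 \<in> {real CARD('n) * Max ((\<lambda>i. (a i)\<^sup>2) ` {2..k}) - (\<Sum>i=2..k. (a i)\<^sup>2) ..
               (\<Sum>i=2..k. (a i)\<^sup>2) / (real CARD('n) - 1)}))"
proof -
  have N2: "2 \<le> real CARD('n)" using assms(1) by linarith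
  show ?thesis
    using arith_part[OF N2 assms(2), of k a] unfolding char_real char_complex by blast
qed

end
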